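(* Let $n\ge 3$ and consider the game with players $N=\{1,\dots,n\}$, strategy sets $[0,1]$ and payoffs $\pi_i(x)=x_i(1-X_N)$, $X_N=\sum_{j\in N}x_j$. Let $C\subset N$ be a coalition of cooperators with $|C|=m$, $1\le m\le n-1$, acting as a Stackelberg leader (PCLE as defined below). Then: (i) for any $x^C$ with $X_C=\sum_{i\in C}x_i<1$, the non-cooperators' game has the unique Nash equilibrium $x_j=\frac{1-X_C}{n-m+1}$ for all $j\in N\setminus C$; (ii) in every PCLE, $X_C=\tfrac12$ and each non-cooperator extracts $\frac{1}{2(n-m+1)}$, so $X_N=1-\frac{1}{2(n-m+1)}$; if cooperators split equally, each cooperator extracts $\frac{1}{2m}$ and the payoffs are $\pi^L_C(m)=\frac{1}{4m(n-m+1)}$ for cooperators and $\pi^L_{NC}(m)=\frac{1}{4(n-m+1)^2}$ for non-cooperators. (iii) Defining, via these formulas (with $\pi^L_C(n)=\tfrac{1}{4n}$ the symmetric socially optimal payoff), a coalition size $m\in\{2,\dots,n-1\}$ to be stable if $\pi^L_{NC}(m)\ge\pi^L_C(m+1)$ and $\pi^L_C(m)\ge\pi^L_{NC}(m-1)$, the size $m$ is stable if and only if $$\frac{m+1}{n-m+1}\ge\frac{n-m+1}{n-m}\qquad\text{and}\qquad\frac{n-m+2}{n-m+1}\ge\frac{m}{n-m+2}.$$ In particular, for $n=8$ the coalition size $m=5$ is stable.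
   Context: For a coalition $C\subset N$ of cooperators, given a joint choice $x^C\in[0,1]^C$, let $\mathrm{NE}(x^C)$ be the set of Nash equilibria of the game among $N\setminus C$ with payoffs $x^{N\setminus C}\mapsto\pi_j(x^{N\setminus C},x^C)$. Let $\tilde\pi(x^C)=\min_{x^{N\setminus C}\in\mathrm{NE}(x^C)}\sum_{i\in C}\pi_i(x^{N\setminus C},x^C)$. A partial cooperative leadership equilibrium (PCLE) is a profile $(x^{N\setminus C}_*,x^C_* )$ with $x^C_*$ maximizing $\tilde\pi$ over $[0,1]^C$ and $x^{N\setminus C}_*$ minimizing $\sum_{i\in C}\pi_i(\cdot,x^C_* )$ over $\mathrm{NE}(x^C_* )$. *)

theory Defs
  imports "HOL-Library.FuncSet" Complex_Main
begin

definition players :: "nat \<Rightarrow> nat set" where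
  "players n = {1..n}"

definition strategies :: "nat set \<Rightarrow> (nat \<Rightarrow> real) set" where
  "strategies S = S \<rightarrow>\<^sub>E {0..1}"

definition combine :: "nat set \<Rightarrow> (nat \<Rightarrow> real) \<Rightarrow> (nat \<Rightarrow> real) \<Rightarrow> (nat \<Rightarrow> real)" where
  "combine C y z = (\<lambda>i. if i \<in> C then y i else z i)"

definition payoff :: "nat \<Rightarrow> nat \<Rightarrow> (nat \<Rightarrow> real) \<Rightarrow> real" where
  "payoff n i x = x i * (1 - (\<Sum>j\<in>players n. x j))"

definition NE :: "nat \<Rightarrow> nat set \<Rightarrow> (nat \<Rightarrow> real) \<Rightarrow> (nat \<Rightarrow> real) set" where
  "NE n C y = {z \<in> strategies (players n - C).
     \<forall>j \<in> players n - C. \<forall>t \<in> {0..1}.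
       payoff n j (combine C y (z(j := t))) \<le> payoff n j (combine C y z)}"

definition coal_payoff :: "nat \<Rightarrow> nat set \<Rightarrow> (nat \<Rightarrow> real) \<Rightarrow> (nat \<Rightarrow> real) \<Rightarrow> real" where
  "coal_payoff n C y z = (\<Sum>i\<in>C. payoff n i (combine C y z))"

definition tilde_pi :: "nat \<Rightarrow> nat set \<Rightarrow> (nat \<Rightarrow> real) \<Rightarrow> real" where
  "tilde_pi n C y = (INF z \<in> NE n C y. coal_payoff n C y z)"

definition PCLE :: "nat \<Rightarrow> nat set \<Rightarrow> (nat \<Rightarrow> real) \<Rightarrow> (nat \<Rightarrow> real) \<Rightarrow> bool" where
  "PCLE n C y z \<longleftrightarrow>
     y \<in> strategies C \<and> (\<forall>y' \<in> strategies C. tilde_pi n C y' \<le> tilde_pi n C y) \<and>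
     z \<in> NE n C y \<and> (\<forall>z' \<in> NE n C y. coal_payoff n C y z \<le> coal_payoff n C y z')"

definition piL_C :: "nat \<Rightarrow> nat \<Rightarrow> real" where
  "piL_C n m = 1 / (4 * real m * (real n - real m + 1))"

definition piL_NC :: "nat \<Rightarrow> nat \<Rightarrow> real" where
  "piL_NC n m = 1 / (4 * (real n - real m + 1)^2)"

definition stable :: "nat \<Rightarrow> nat \<Rightarrow> bool" where
  "stable n m \<longleftrightarrow> 2 \<le> m \<and> m \<le> n - 1 \<and>
     piL_NC n m \<ge> piL_C n (m + 1) \<and> piL_C n m \<ge> piL_NC n (m - 1)"

end

theory Submission
  imports Defs
begin



lemma br:
  fixes b u :: real
  assumes "b \<le> 2" "0 \<le> u" "u \<le> 1"
  shows "(\<forall>t\<in>{0..1}. t*(b-t) \<le> u*(b-u)) \<longleftrightarrow> u = max 0 (b/2)"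
proof
  assume H: "\<forall>t\<in>{0..1}. t*(b-t) \<le> u*(b-u)"
  show "u = max 0 (b/2)"
  proof (cases "b \<le> 0")
    case True
    have 1: "0 \<le> u*(b-u)" using H[rule_format, of 0] by simp
    have "b - u \<le> 0" using True assms by linarith
    hence "u*(b-u) \<le> 0" using assms(2) by (rule mult_nonneg_nonpos[rotated])
    hence "u*(b-u) = 0" using 1 by linarith
    hence "u = 0 \<or> b = u" by simp
    hence "u = 0" using True assms by linarith
    thus ?thesis using True by simp
  next
    case False
    have "(b/2)*(b-b/2) \<le> u*(b-u)" using H[rule_format, of "b/2"] False assms by simp
    hence "(u - b/2)^2 \<le> 0" by (simp add: power2_eq_square algebra_simps)
    hence "u - b/2 = 0" by simp
    hence "u = b/2" by simp
    thus ?thesis using False by simp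
  qed
next
  assume "u = max 0 (b/2)"
  show "\<forall>t\<in>{0..1}. t*(b-t) \<le> u*(b-u)"
  proof
    fix t :: real assume t: "t \<in> {0..1}"
    show "t*(b-t) \<le> u*(b-u)"
    proof (cases "b \<le> 0")
      case True
      have "b - t \<le> 0" using True t by simp
      hence "t*(b-t) \<le> 0" using t by (simp add: mult_nonneg_nonpos)
      then show ?thesis using True \<open>u = _\<close> by simp
    next
      case False
      have bu: "b = 2*u" using False \<open>u = _\<close> by simp
      have "0 \<le> (t - u)^2" by simp
      hence "t*(2*u-t) \<le> u*(2*u-u)" by (simp add: power2_eq_square algebra_simps)
      then show ?thesis unfolding bu .
    qed
  qed
qed


lemma vlem:
  fixes X d V :: real
  assumes X: "0 \<le> X" and d: "0 \<le> d" and V: "V = X*(1-X-d*(max 0 (1-X)/(d+1)))"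
  shows "V \<le> 1/(4*(d+1)) \<and> (V = 1/(4*(d+1)) \<longleftrightarrow> X = 1/2)"
proof (cases "X < 1")
  case True
  have "1-X-d*((1-X)/(d+1)) = (1-X)/(d+1)" using d by (simp add: field_simps)
  hence V2: "V = X*(1-X)/(d+1)" using V True by simp
  have e0: "1/(4*(d+1)) - V = (1/4 - X*(1-X))/(d+1)" unfolding V2
    by (simp add: diff_divide_distrib)
  have "1/4 - X*(1-X) = (X-1/2)^2" by (simp add: power2_eq_square algebra_simps)
  hence e: "1/(4*(d+1)) - V = (X - 1/2)^2/(d+1)" using e0 by simp
  have "0 \<le> (X - 1/2)^2/(d+1)" using d by simp
  hence 1: "V \<le> 1/(4*(d+1))" using e by linarith
  have "V = 1/(4*(d+1)) \<longleftrightarrow> (X - 1/2)^2/(d+1) = 0" using e by linarith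
  also have "\<dots> \<longleftrightarrow> X = 1/2" using d by simp
  finally show ?thesis using 1 by simp
next
  case False
  hence "V = X*(1-X)" using V by simp
  moreover have "X*(1-X) \<le> 0" using False X by (simp add: mult_nonneg_nonpos)
  moreover have "0 < 1/(4*(d+1))" using d by simp
  ultimately have "V < 1/(4*(d+1))" by linarith
  moreover have "X \<noteq> 1/2" using False by auto
  ultimately show ?thesis by auto
qed

lemma fp_lem:
  fixes u a S :: real
  assumes "u = max 0 ((a - S + u)/2)"
  shows "u = max 0 (a - S)"
  using assms by (auto simp: max_def split: if_splits)

context
  fixes n :: nat and C :: "nat set"
  assumes Csub: "C \<subseteq> players n"
begin

lemma finN: "finite (players n)" by (simp add: players_def)
lemma finC: "finite C" using Csub finN finite_subset by blast
lemma finD: "finite (players n - C)" using finN by simp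

lemma sum_combine:
  "(\<Sum>j\<in>players n. combine C y z j) = (\<Sum>i\<in>C. y i) + (\<Sum>j\<in>players n - C. z j)"
proof -
  have "(\<Sum>j\<in>players n. combine C y z j) = (\<Sum>j\<in>players n - C. combine C y z j) + (\<Sum>j\<in>C. combine C y z j)"
    using sum.subset_diff[OF Csub finN] by simp
  also have "(\<Sum>j\<in>players n - C. combine C y z j) = (\<Sum>j\<in>players n - C. z j)"
    by (rule sum.cong) (auto simp: combine_def)
  also have "(\<Sum>j\<in>C. combine C y z j) = (\<Sum>i\<in>C. y i)"
    by (rule sum.cong) (auto simp: combine_def)
  finally show ?thesis by simp
qed

lemma payoff_upd:
  assumes j: "j \<in> players n - C"
  shows "payoff n j (combine C y (z(j:=t))) =
     t * ((1 - (\<Sum>i\<in>C. y i) - (\<Sum>k\<in>players n - C - {j}. z k)) - t)"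
proof -
  have s1: "(\<Sum>k\<in>players n - C - {j}. (z(j:=t)) k) = (\<Sum>k\<in>players n - C - {j}. z k)"
    by (rule sum.cong) auto
  have "(\<Sum>k\<in>players n - C. (z(j:=t)) k) = (z(j:=t)) j + (\<Sum>k\<in>players n - C - {j}. (z(j:=t)) k)"
    using sum.remove[OF finD j] by blast
  hence s2: "(\<Sum>k\<in>players n - C. (z(j:=t)) k) = t + (\<Sum>k\<in>players n - C - {j}. z k)"
    using s1 by simp
  have cj: "combine C y (z(j:=t)) j = t" using j by (simp add: combine_def)
  show ?thesis unfolding payoff_def sum_combine cj s2 by (simp add: algebra_simps)
qed

lemma payoff_self:
  assumes j: "j \<in> players n - C"
  shows "payoff n j (combine C y z) =
     z j * ((1 - (\<Sum>i\<in>C. y i) - (\<Sum>k\<in>players n - C - {j}. z k)) - z j)"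
  using payoff_upd[OF j, of y z "z j"] by simp

lemma XC_nonneg: "y \<in> strategies C \<Longrightarrow> 0 \<le> (\<Sum>i\<in>C. y i)"
  by (rule sum_nonneg) (auto simp: strategies_def PiE_iff)

lemma NE_char:
  assumes y: "y \<in> strategies C"
  shows "z \<in> NE n C y \<longleftrightarrow> z \<in> strategies (players n - C) \<and>
    (\<forall>j\<in>players n - C. z j = max 0 ((1 - (\<Sum>i\<in>C. y i) - (\<Sum>k\<in>players n - C - {j}. z k))/2))"
proof -
  have XC: "0 \<le> (\<Sum>i\<in>C. y i)" using XC_nonneg[OF y] .
  have key: "(\<forall>t\<in>{0..1}. payoff n j (combine C y (z(j := t))) \<le> payoff n j (combine C y z))
      \<longleftrightarrow> z j = max 0 ((1 - (\<Sum>i\<in>C. y i) - (\<Sum>k\<in>players n - C - {j}. z k))/2)"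
    if zs: "z \<in> strategies (players n - C)" and j: "j \<in> players n - C" for j
  proof -
    have zj: "0 \<le> z j" "z j \<le> 1" using zs j by (auto simp: strategies_def PiE_iff)
    have "0 \<le> (\<Sum>k\<in>players n - C - {j}. z k)"
      using zs by (intro sum_nonneg) (auto simp: strategies_def PiE_iff)
    hence b: "1 - (\<Sum>i\<in>C. y i) - (\<Sum>k\<in>players n - C - {j}. z k) \<le> 2" using XC by linarith
    show ?thesis
      unfolding payoff_upd[OF j] by (unfold payoff_self[OF j], rule br[OF b zj])
  qed
  show ?thesis
  proof
    assume "z \<in> NE n C y"
    hence zs: "z \<in> strategies (players n - C)" and
      H: "\<forall>j\<in>players n - C. \<forall>t\<in>{0..1}. payoff n j (combine C y (z(j := t))) \<le> payoff n j (combine C y z)"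
      unfolding NE_def by auto
    show "z \<in> strategies (players n - C) \<and>
      (\<forall>j\<in>players n - C. z j = max 0 ((1 - (\<Sum>i\<in>C. y i) - (\<Sum>k\<in>players n - C - {j}. z k))/2))"
    proof (intro conjI ballI)
      fix j assume j: "j \<in> players n - C"
      show "z j = max 0 ((1 - (\<Sum>i\<in>C. y i) - (\<Sum>k\<in>players n - C - {j}. z k))/2)"
        using key[OF zs j] H j by blast
    qed (rule zs)
  next
    assume A: "z \<in> strategies (players n - C) \<and>
      (\<forall>j\<in>players n - C. z j = max 0 ((1 - (\<Sum>i\<in>C. y i) - (\<Sum>k\<in>players n - C - {j}. z k))/2))"
    hence zs: "z \<in> strategies (players n - C)" by blast
    have "\<forall>j\<in>players n - C. \<forall>t\<in>{0..1}. payoff n j (combine C y (z(j := t))) \<le> payoff n j (combine C y z)"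
    proof
      fix j assume j: "j \<in> players n - C"
      show "\<forall>t\<in>{0..1}. payoff n j (combine C y (z(j := t))) \<le> payoff n j (combine C y z)"
        using key[OF zs j] A j by blast
    qed
    thus "z \<in> NE n C y" unfolding NE_def using zs by blast
  qed
qed

lemma cardD: "card (players n - C) = card (players n) - card C"
  using card_Diff_subset[OF finC Csub] .

lemma NE_eq:
  assumes y: "y \<in> strategies C"
  shows "NE n C y = {restrict (\<lambda>j. max 0 (1 - (\<Sum>i\<in>C. y i)) / (real (card (players n - C)) + 1)) (players n - C)}"
    (is "_ = {?z0}")
proof -
  define a where "a = 1 - (\<Sum>i\<in>C. y i)"
  define d where "d = real (card (players n - C))"
  define c where "c = max 0 a / (d + 1)"
  have d0: "0 \<le> d" unfolding d_def by simp
  have a1: "a \<le> 1" using XC_nonneg[OF y] unfolding a_def by linarith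
  have z0: "?z0 = restrict (\<lambda>j. c) (players n - C)" unfolding c_def a_def d_def by (rule refl)
  have cd: "c * (d+1) = max 0 a" unfolding c_def using d0 by simp
  have c0: "0 \<le> c" unfolding c_def using d0 by (intro divide_nonneg_nonneg) auto
  show ?thesis
  proof
    show "NE n C y \<subseteq> {?z0}"
    proof
      fix z assume "z \<in> NE n C y"
      note zz = NE_char[OF y, THEN iffD1, OF this]
      from zz have zs: "z \<in> strategies (players n - C)" by (rule conjunct1)
      from zz have H: "\<forall>j\<in>players n - C. z j = max 0 ((a - (\<Sum>k\<in>players n - C - {j}. z k))/2)"
        unfolding a_def by (rule conjunct2)
      define S where "S = (\<Sum>k\<in>players n - C. z k)"
      have zj: "z j = max 0 (a - S)" if j: "j \<in> players n - C" for j
      proof -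
        have "S = z j + (\<Sum>k\<in>players n - C - {j}. z k)"
          unfolding S_def using sum.remove[OF finD j] by blast
        hence e: "(\<Sum>k\<in>players n - C - {j}. z k) = S - z j" by simp
        have "z j = max 0 ((a - (\<Sum>k\<in>players n - C - {j}. z k))/2)" using H j by blast
        hence "z j = max 0 ((a - (S - z j))/2)" unfolding e .
        hence "z j = max 0 ((a - S + z j)/2)" by (simp add: algebra_simps)
        thus ?thesis by (rule fp_lem)

      qed
      have "(\<Sum>k\<in>players n - C. z k) = (\<Sum>k\<in>players n - C. max 0 (a - S))"
        using zj by (rule sum.cong[OF refl])
      hence SS: "S = d * max 0 (a - S)" unfolding S_def[symmetric] d_def by simp
      have zc: "max 0 (a - S) = c"
      proof (cases "a - S > 0")
        case True
        hence "S = d * (a - S)" using SS by simp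
        hence aeq: "a = (a - S) * (d+1)" by (simp add: algebra_simps)
        have "0 < (a-S)*(d+1)" using d0 True by (intro mult_pos_pos) auto
        hence "a > 0" using aeq by simp
        hence m: "max 0 a = a" by simp
        have "c*(d+1) = (a-S)*(d+1)" using cd m aeq by linarith
        moreover have "d + 1 \<noteq> 0" using d0 by simp
        ultimately have "c = (a - S)" by simp
        thus ?thesis using True by simp
      next
        case False
        hence "S = 0" using SS by simp
        thus ?thesis using False unfolding c_def by simp
      qed
      have "z = ?z0" unfolding z0
      proof
        fix k show "z k = restrict (\<lambda>j. c) (players n - C) k"
        proof (cases "k \<in> players n - C")
          case True
          have "z k = c" using zj[OF True] zc by simp
          thus ?thesis using True by simp
        next
          case False
          have "z k = undefined" using PiE_arb[OF zs[unfolded strategies_def] False] .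
          moreover have "restrict (\<lambda>j. c) (players n - C) k = undefined" unfolding restrict_def by (rule if_not_P[OF False])
          ultimately show ?thesis by simp
        qed
      qed
      thus "z \<in> {?z0}" by simp
    qed
  next
    have c1: "c \<le> 1"
    proof -
      have "c \<le> c * (d+1)" using c0 d0 by (simp add: algebra_simps)
      also have "\<dots> \<le> 1" using cd a1 by simp
      finally show ?thesis .
    qed
    have "?z0 \<in> NE n C y"
      unfolding NE_char[OF y] z0
    proof (intro conjI ballI)
      show "restrict (\<lambda>j. c) (players n - C) \<in> strategies (players n - C)"
        using c0 c1 by (simp add: strategies_def)
    next
      fix j assume j: "j \<in> players n - C"
      have cardj: "card (players n - C - {j}) = card (players n - C) - 1"
        using j finD by simp
      have "players n - C \<noteq> {}" using j by blast
      hence "card (players n - C) \<noteq> 0" using finD by simp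
      hence pos: "card (players n - C) \<ge> 1" by simp
      have "(\<Sum>k\<in>players n - C - {j}. restrict (\<lambda>j. c) (players n - C) k) = (\<Sum>k\<in>players n - C - {j}. c)"
        by (rule sum.cong) auto
      also have "\<dots> = real (card (players n - C - {j})) * c" by simp
      also have "real (card (players n - C - {j})) = d - 1" unfolding cardj d_def using pos by (simp add: of_nat_diff)
      finally have sj: "(\<Sum>k\<in>players n - C - {j}. restrict (\<lambda>j. c) (players n - C) k) = (d - 1) * c" .
      have "c = max 0 ((a - (d - 1) * c)/2)"
      proof (cases "a > 0")
        case True
        hence "c * (d+1) = a" using cd by simp
        hence "a - (d - 1) * c = 2 * c" by (simp add: algebra_simps)
        thus ?thesis using c0 by simp
      next
        case False
        hence "c = 0" unfolding c_def by simp
        thus ?thesis using False by simp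
      qed
      thus "restrict (\<lambda>j. c) (players n - C) j =
        max 0 ((1 - (\<Sum>i\<in>C. y i) - (\<Sum>k\<in>players n - C - {j}. restrict (\<lambda>j. c) (players n - C) k)) / 2)"
        unfolding sj a_def[symmetric] using j by simp
    qed
    thus "{?z0} \<subseteq> NE n C y" by simp
  qed
qed

lemma coal_eq:
  "coal_payoff n C y z = (\<Sum>i\<in>C. y i) * (1 - ((\<Sum>i\<in>C. y i) + (\<Sum>j\<in>players n - C. z j)))"
proof -
  have "coal_payoff n C y z = (\<Sum>i\<in>C. y i * (1 - ((\<Sum>i\<in>C. y i) + (\<Sum>j\<in>players n - C. z j))))"
    unfolding coal_payoff_def payoff_def sum_combine by (rule sum.cong) (auto simp: combine_def)
  thus ?thesis by (simp add: sum_distrib_right)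
qed

lemma tilde_eq:
  assumes y: "y \<in> strategies C"
  shows "tilde_pi n C y = (\<Sum>i\<in>C. y i) * (1 - (\<Sum>i\<in>C. y i) - real (card (players n - C)) *
     (max 0 (1 - (\<Sum>i\<in>C. y i)) / (real (card (players n - C)) + 1)))"
proof -
  define c where "c = max 0 (1 - (\<Sum>i\<in>C. y i)) / (real (card (players n - C)) + 1)"
  have "tilde_pi n C y = coal_payoff n C y (restrict (\<lambda>j. c) (players n - C))"
    unfolding tilde_pi_def NE_eq[OF y] c_def by simp
  moreover have "(\<Sum>j\<in>players n - C. restrict (\<lambda>j. c) (players n - C) j) = (\<Sum>j\<in>players n - C. c)"
    by (rule sum.cong) auto
  ultimately have "tilde_pi n C y = (\<Sum>i\<in>C. y i) * (1 - ((\<Sum>i\<in>C. y i) + real (card (players n - C)) * c))"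
    unfolding coal_eq by simp
  also have "\<dots> = (\<Sum>i\<in>C. y i) * (1 - (\<Sum>i\<in>C. y i) - real (card (players n - C)) * c)"
    by (simp add: algebra_simps)
  finally show ?thesis unfolding c_def .
qed

end



lemma inv_le: "0 < A \<Longrightarrow> 0 < B \<Longrightarrow> (1/A \<le> 1/B) \<longleftrightarrow> (B \<le> (A::real))"
  using inverse_le_iff_le[of A B] by (simp add: inverse_eq_divide)

lemma stable_iff:
  fixes n k :: nat
  assumes k2: "2 \<le> k" and kn: "k \<le> n - 1"
  shows "stable n k \<longleftrightarrow>
        (real k + 1) / (real n - real k + 1) \<ge> (real n - real k + 1) / (real n - real k)
      \<and> (real n - real k + 2) / (real n - real k + 1) \<ge> real k / (real n - real k + 2)"
proof -
  define p where "p = real n - real k"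
  have kn': "k + 1 \<le> n" using k2 kn by linarith
  have p1: "1 \<le> p" unfolding p_def using kn' by linarith
  have r1: "real n - real (k+1) + 1 = p" unfolding p_def by simp
  have r2: "real n - real (k-1) + 1 = p + 2" unfolding p_def using k2 by (simp add: of_nat_diff)
  have k0: "0 < real k" using k2 by simp
  have A: "piL_NC n k \<ge> piL_C n (k + 1) \<longleftrightarrow> (real k + 1) / (p + 1) \<ge> (p + 1) / p"
  proof -
    have "piL_NC n k \<ge> piL_C n (k + 1) \<longleftrightarrow> 1/(4*(p+1)^2) \<ge> 1/(4*((real k + 1)*p))"
      unfolding piL_NC_def piL_C_def r1 p_def by (simp add: algebra_simps)
    also have "\<dots> \<longleftrightarrow> 4*(p+1)^2 \<le> 4*((real k + 1)*p)" using p1 k0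
      by (intro inv_le) auto
    also have "\<dots> \<longleftrightarrow> (p+1)^2 \<le> (real k + 1)*p" by simp
    also have "\<dots> \<longleftrightarrow> (real k + 1) / (p + 1) \<ge> (p + 1) / p" using p1 k0
      by (simp add: field_simps power2_eq_square)
    finally show ?thesis .
  qed
  have B: "piL_C n k \<ge> piL_NC n (k - 1) \<longleftrightarrow> (p + 2) / (p + 1) \<ge> real k / (p + 2)"
  proof -
    have "piL_C n k \<ge> piL_NC n (k - 1) \<longleftrightarrow> 1/(4*(real k*(p+1))) \<ge> 1/(4*(p+2)^2)"
      unfolding piL_NC_def piL_C_def r2 unfolding p_def by (simp add: algebra_simps)
    also have "\<dots> \<longleftrightarrow> 4*(real k * (p+1)) \<le> 4*(p+2)^2" using p1 k0
      by (intro inv_le) auto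
    also have "\<dots> \<longleftrightarrow> real k * (p+1) \<le> (p+2)^2" by simp
    also have "\<dots> \<longleftrightarrow> (p + 2) / (p + 1) \<ge> real k / (p + 2)" using p1 k0
      by (simp add: field_simps power2_eq_square)
    finally show ?thesis .
  qed
  show ?thesis unfolding stable_def A B p_def using k2 kn by simp
qed

lemma stable85: "stable 8 5"
  unfolding stable_def piL_C_def piL_NC_def by simp



theorem mainTheorem11:
  fixes n m :: nat and C :: "nat set"
  assumes "n \<ge> 3" and "C \<subseteq> players n" and "card C = m" and "1 \<le> m" and "m \<le> n - 1"
  shows
    "(\<forall>y \<in> strategies C. (\<Sum>i\<in>C. y i) < 1 \<longrightarrow>
        NE n C y = {restrict (\<lambda>j. (1 - (\<Sum>i\<in>C. y i)) / (real n - real m + 1)) (players n - C)})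
   \<and> (\<forall>y z. PCLE n C y z \<longrightarrow>
        (\<Sum>i\<in>C. y i) = 1/2
      \<and> (\<forall>j \<in> players n - C. z j = 1 / (2 * (real n - real m + 1)))
      \<and> (\<Sum>j\<in>players n. combine C y z j) = 1 - 1 / (2 * (real n - real m + 1))
      \<and> ((\<forall>i\<in>C. \<forall>i'\<in>C. y i = y i') \<longrightarrow>
           (\<forall>i\<in>C. y i = 1 / (2 * real m) \<and> payoff n i (combine C y z) = piL_C n m)
         \<and> (\<forall>j \<in> players n - C. payoff n j (combine C y z) = piL_NC n m)))
   \<and> (\<exists>y z. PCLE n C y z \<and> (\<forall>i\<in>C. \<forall>i'\<in>C. y i = y i'))
   \<and> (\<forall>k \<in> {2..n-1}. stable n k \<longleftrightarrow>
        (real k + 1) / (real n - real k + 1) \<ge> (real n - real k + 1) / (real n - real k)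
      \<and> (real n - real k + 2) / (real n - real k + 1) \<ge> real k / (real n - real k + 2))
   \<and> stable 8 5"
proof -
  note Csub = assms(2)
  define D where "D = players n - C"
  define dd where "dd = real (card D)"
  have cardN: "card (players n) = n" by (simp add: players_def)
  have cardDm: "card D = n - m" unfolding D_def cardD[OF Csub] cardN assms(3) ..
  have mn: "m \<le> n" using assms(5) by linarith
  have dd: "dd = real n - real m" unfolding dd_def cardDm using mn by (simp add: of_nat_diff)
  have dd0: "0 \<le> dd" unfolding dd_def by simp
  have q: "dd + 1 = real n - real m + 1" using dd by simp
  have m0: "0 < real m" using assms(4) by simp
  have tb: "tilde_pi n C y \<le> 1/(4*(dd+1)) \<and> (tilde_pi n C y = 1/(4*(dd+1)) \<longleftrightarrow> (\<Sum>i\<in>C. y i) = 1/2)"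
    if y: "y \<in> strategies C" for y
    by (rule vlem[OF XC_nonneg[OF Csub y] dd0]) (simp add: tilde_eq[OF Csub y] dd_def D_def)
  have NEy: "NE n C y = {restrict (\<lambda>j. max 0 (1 - (\<Sum>i\<in>C. y i)) / (dd + 1)) D}"
    if y: "y \<in> strategies C" for y
    using NE_eq[OF Csub y] unfolding dd_def D_def .
  define yh where "yh = restrict (\<lambda>i. 1/(2*real m)) C"
  have yhS: "yh \<in> strategies C"
  proof -
    have "1/(2*real m) \<le> 1" using assms(4) by (simp add: field_simps)
    thus ?thesis unfolding yh_def strategies_def using m0 by simp
  qed
  have XCyh: "(\<Sum>i\<in>C. yh i) = 1/2"
  proof -
    have "(\<Sum>i\<in>C. yh i) = (\<Sum>i\<in>C. 1/(2*real m))" unfolding yh_def by (rule sum.cong) auto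
    also have "\<dots> = real m * (1/(2*real m))" using assms(3) by simp
    also have "\<dots> = 1/2" using m0 by simp
    finally show ?thesis .
  qed
  have tyh: "tilde_pi n C yh = 1/(4*(dd+1))" using tb[OF yhS] XCyh by simp
  define zh where "zh = restrict (\<lambda>j. max 0 (1 - (1/2::real)) / (dd + 1)) D"
  have NEyh: "NE n C yh = {zh}" unfolding NEy[OF yhS] XCyh zh_def ..
  have P1: "\<forall>y \<in> strategies C. (\<Sum>i\<in>C. y i) < 1 \<longrightarrow>
        NE n C y = {restrict (\<lambda>j. (1 - (\<Sum>i\<in>C. y i)) / (real n - real m + 1)) (players n - C)}"
  proof (intro ballI impI)
    fix y assume y: "y \<in> strategies C" and lt: "(\<Sum>i\<in>C. y i) < 1"
    have "max 0 (1 - (\<Sum>i\<in>C. y i)) = 1 - (\<Sum>i\<in>C. y i)" using lt by simp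
    thus "NE n C y = {restrict (\<lambda>j. (1 - (\<Sum>i\<in>C. y i)) / (real n - real m + 1)) (players n - C)}"
      unfolding NEy[OF y] q D_def by simp
  qed
  have P2: "\<forall>y z. PCLE n C y z \<longrightarrow>
        (\<Sum>i\<in>C. y i) = 1/2
      \<and> (\<forall>j \<in> players n - C. z j = 1 / (2 * (real n - real m + 1)))
      \<and> (\<Sum>j\<in>players n. combine C y z j) = 1 - 1 / (2 * (real n - real m + 1))
      \<and> ((\<forall>i\<in>C. \<forall>i'\<in>C. y i = y i') \<longrightarrow>
           (\<forall>i\<in>C. y i = 1 / (2 * real m) \<and> payoff n i (combine C y z) = piL_C n m)
         \<and> (\<forall>j \<in> players n - C. payoff n j (combine C y z) = piL_NC n m))"
  proof (intro allI impI)
    fix y z assume P: "PCLE n C y z"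
    have y: "y \<in> strategies C" using P unfolding PCLE_def by blast
    have "tilde_pi n C yh \<le> tilde_pi n C y" using P yhS unfolding PCLE_def by blast
    hence "tilde_pi n C y = 1/(4*(dd+1))" using tb[OF y] tyh by linarith
    hence XC: "(\<Sum>i\<in>C. y i) = 1/2" using tb[OF y] by blast
    have "z \<in> NE n C y" using P unfolding PCLE_def by blast
    hence zeq: "z = restrict (\<lambda>j. max 0 (1 - (1/2::real)) / (dd + 1)) D"
      unfolding NEy[OF y] XC by simp
    have zj: "z j = 1 / (2 * (real n - real m + 1))" if j: "j \<in> players n - C" for j
    proof -
      have "z j = (1/2) / (dd+1)" using j unfolding zeq D_def by simp
      thus ?thesis unfolding q by simp
    qed
    have sz: "(\<Sum>j\<in>players n - C. z j) = dd * (1 / (2 * (dd + 1)))"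
    proof -
      have "(\<Sum>j\<in>players n - C. z j) = (\<Sum>j\<in>players n - C. 1 / (2 * (dd + 1)))"
        using zj unfolding q by (rule sum.cong[OF refl])
      thus ?thesis unfolding dd_def D_def by simp
    qed
    have XN: "(\<Sum>j\<in>players n. combine C y z j) = 1 - 1 / (2 * (dd + 1))"
    proof -
      have "(\<Sum>j\<in>players n. combine C y z j) = 1/2 + dd * (1 / (2 * (dd + 1)))"
        unfolding sum_combine[OF Csub] XC sz ..
      also have "\<dots> = 1 - 1 / (2 * (dd + 1))" using dd0 by (simp add: field_simps)
      finally show ?thesis .
    qed
    have pay: "payoff n i (combine C y z) = combine C y z i * (1 / (2 * (dd + 1)))" for i
      unfolding payoff_def XN by simp
    show "(\<Sum>i\<in>C. y i) = 1/2
      \<and> (\<forall>j \<in> players n - C. z j = 1 / (2 * (real n - real m + 1)))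
      \<and> (\<Sum>j\<in>players n. combine C y z j) = 1 - 1 / (2 * (real n - real m + 1))
      \<and> ((\<forall>i\<in>C. \<forall>i'\<in>C. y i = y i') \<longrightarrow>
           (\<forall>i\<in>C. y i = 1 / (2 * real m) \<and> payoff n i (combine C y z) = piL_C n m)
         \<and> (\<forall>j \<in> players n - C. payoff n j (combine C y z) = piL_NC n m))"
    proof (intro conjI impI ballI)
      show "(\<Sum>i\<in>C. y i) = 1/2" by (rule XC)
      show "\<And>j. j \<in> players n - C \<Longrightarrow> z j = 1 / (2 * (real n - real m + 1))" by (rule zj)
      show "(\<Sum>j\<in>players n. combine C y z j) = 1 - 1 / (2 * (real n - real m + 1))"
        unfolding XN q ..
    next
      fix j assume j: "j \<in> players n - C"
      have "combine C y z j = z j" using j by (simp add: combine_def)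
      thus "payoff n j (combine C y z) = piL_NC n m"
        unfolding pay zj[OF j] piL_NC_def q[symmetric] using dd0 by (simp add: power2_eq_square algebra_simps)
    next
      assume eq: "\<forall>i\<in>C. \<forall>i'\<in>C. y i = y i'"
      have Cne: "C \<noteq> {}" using assms(3,4) by auto
      then obtain i0 where i0: "i0 \<in> C" by blast
      have "(\<Sum>i\<in>C. y i) = (\<Sum>i\<in>C. y i0)" proof (rule sum.cong[OF refl])
        fix i assume "i \<in> C" thus "y i = y i0" using eq i0 by blast
      qed
      also have "\<dots> = real m * y i0" using assms(3) by simp
      finally have "real m * y i0 = 1/2" using XC by simp
      hence yi0: "y i0 = 1/(2*real m)" using m0 by (simp add: field_simps)
      fix i assume i: "i \<in> C"
      show yi: "y i = 1 / (2 * real m)" proof -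
        have "y i = y i0" using eq i i0 by blast
        thus ?thesis using yi0 by simp
      qed
      have "combine C y z i = y i" using i by (simp add: combine_def)
      thus "payoff n i (combine C y z) = piL_C n m"
        unfolding pay yi piL_C_def q[symmetric] by simp
    qed
  qed
  have P3: "\<exists>y z. PCLE n C y z \<and> (\<forall>i\<in>C. \<forall>i'\<in>C. y i = y i')"
  proof (intro exI conjI)
    show "PCLE n C yh zh"
      unfolding PCLE_def
    proof (intro conjI ballI)
      show "yh \<in> strategies C" by (rule yhS)
      show "\<And>y'. y' \<in> strategies C \<Longrightarrow> tilde_pi n C y' \<le> tilde_pi n C yh"
        using tb tyh by simp
      show "zh \<in> NE n C yh" unfolding NEyh by simp
      show "\<And>z'. z' \<in> NE n C yh \<Longrightarrow> coal_payoff n C yh zh \<le> coal_payoff n C yh z'"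
        unfolding NEyh by simp
    qed
    show "\<forall>i\<in>C. \<forall>i'\<in>C. yh i = yh i'" unfolding yh_def by simp
  qed
  have P4: "\<forall>k \<in> {2..n-1}. stable n k \<longleftrightarrow>
        (real k + 1) / (real n - real k + 1) \<ge> (real n - real k + 1) / (real n - real k)
      \<and> (real n - real k + 2) / (real n - real k + 1) \<ge> real k / (real n - real k + 2)"
    using stable_iff by auto
  show ?thesis using P1 P2 P3 P4 stable85 by blast
qed

end
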